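(* Let $(\mathscr{C},\mathbb{E},\mathfrak{s})$ be an extriangulated category such that for every object $X$ the morphism $X\to 0$ is an $\mathbb{E}$-inflation and $0\to X$ is an $\mathbb{E}$-deflation, and let $\Sigma$, $\mathbf{E}^1$ and $\mathfrak{r}$ be as in the context. Then the triple $(\mathscr{C},\mathbf{E}^1,\mathfrak{r})$ satisfies the axioms (ET3) and (ET3)$^{\mathrm{op}}$, namely: (ET3) for any $\varepsilon\in\mathbf{E}^1(C,A)$, $\varepsilon'\in\mathbf{E}^1(C',A')$ with $\mathfrak{r}(\varepsilon)=[A\xrightarrow{x}B\xrightarrow{y}C]$, $\mathfrak{r}(\varepsilon')=[A'\xrightarrow{x'}B'\xrightarrow{y'}C']$, and any $a\colon A\to A'$, $b\colon B\to B'$ with $bx=x'a$, there exists $c\colon C\to C'$ with $cy=y'b$ and $\mathbf{E}^1(C,a)(\varepsilon)=\mathbf{E}^1(c,A')(\varepsilon')$; (ET3)$^{\mathrm{op}}$ for the same data and any $b\colon B\to B'$, $c\colon C\to C'$ with $y'b=cy$, there exists $a\colon A\to A'$ with $bx=x'a$ and $\mathbf{E}^1(C,a)(\varepsilon)=\mathbf{E}^1(c,A')(\varepsilon')$.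
   Context: An extriangulated category $(\mathscr{C},\mathbb{E},\mathfrak{s})$ is in the sense of Nakaoka–Palu: $\mathscr{C}$ additive, $\mathbb{E}\colon\mathscr{C}^{\mathrm{op}}\times\mathscr{C}\to Ab$ biadditive, $\mathfrak{s}$ an additive realisation assigning to $\delta\in\mathbb{E}(C,A)$ an equivalence class of sequences $[A\to B\to C]$, satisfying (ET1)–(ET4)$^{\mathrm{op}}$. For $a\colon A\to A'$ and $c\colon C'\to C$ write $a_*\delta=\mathbb{E}(C,a)(\delta)$ and $c^*\delta=\mathbb{E}(c,A)(\delta)$. A morphism $x\colon A\to B$ is an $\mathbb{E}$-inflation if $\mathfrak{s}(\delta)=[A\xrightarrow{x}B\to C]$ for some $\delta\in\mathbb{E}(C,A)$; dually for $\mathbb{E}$-deflations. For each object $Y$, $\Sigma Y$ is a chosen object with $\delta_Y\in\mathbb{E}(\Sigma Y,Y)$ such that $\mathfrak{s}(\delta_Y)=[Y\to 0\to\Sigma Y]$; for $f\colon X\to Y$, $\Sigma f$ is the unique morphism with $f_*\delta_X=(\Sigma f)^*\delta_Y$. $\mathbf{E}^1(C,A)=\mathscr{C}(C,\Sigma A)$, with $\mathbf{E}^1(C,a)(\varepsilon)=\Sigma a\circ\varepsilon$ and $\mathbf{E}^1(c,A)(\varepsilon)=\varepsilon\circ c$. The correspondence $\mathfrak{r}$ assigns to $\varepsilon\in\mathbf{E}^1(C,A)$ the class $\mathfrak{r}(\varepsilon)=\mathfrak{s}(\varepsilon^*\delta_A)$. *)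

theory Defs
  imports Main "HOL-Algebra.Group"
begin

text \<open>Objects of type 'o, morphisms of type 'm (with domain/codomain maps),
  extensions of type 'e: an extension d lies in E(C,A) iff eC d = C and eA d = A.
  cmp g f is the composite g o f.  push a d = a_* d, pull c d = c^* d.
  real d is the realisation s(d), an equivalence class of pairs (x,y) of
  composable morphisms A -x-> B -y-> C.\<close>

record ('o,'m,'e) extri_data =
  Ob :: "'o set"
  Mor :: "'m set"
  Dm :: "'m \<Rightarrow> 'o"
  Cd :: "'m \<Rightarrow> 'o"
  cmp :: "'m \<Rightarrow> 'm \<Rightarrow> 'm"
  idm :: "'o \<Rightarrow> 'm"
  madd :: "'m \<Rightarrow> 'm \<Rightarrow> 'm"
  mzero :: "'o \<Rightarrow> 'o \<Rightarrow> 'm"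
  Ext :: "'e set"
  eC :: "'e \<Rightarrow> 'o"
  eA :: "'e \<Rightarrow> 'o"
  eadd :: "'e \<Rightarrow> 'e \<Rightarrow> 'e"
  ezero :: "'o \<Rightarrow> 'o \<Rightarrow> 'e"
  push :: "'m \<Rightarrow> 'e \<Rightarrow> 'e"
  pull :: "'m \<Rightarrow> 'e \<Rightarrow> 'e"
  real :: "'e \<Rightarrow> ('m \<times> 'm) set"

definition hom :: "('o,'m,'e,'z) extri_data_scheme \<Rightarrow> 'o \<Rightarrow> 'o \<Rightarrow> 'm set" where
  "hom X A B = {f \<in> Mor X. Dm X f = A \<and> Cd X f = B}"

definition ext :: "('o,'m,'e,'z) extri_data_scheme \<Rightarrow> 'o \<Rightarrow> 'o \<Rightarrow> 'e set" where
  "ext X C A = {d \<in> Ext X. eC X d = C \<and> eA X d = A}"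

definition category :: "('o,'m,'e,'z) extri_data_scheme \<Rightarrow> bool" where
  "category X \<longleftrightarrow>
    (\<forall>f\<in>Mor X. Dm X f \<in> Ob X \<and> Cd X f \<in> Ob X) \<and>
    (\<forall>A\<in>Ob X. idm X A \<in> hom X A A) \<and>
    (\<forall>A B C f g. f \<in> hom X A B \<longrightarrow> g \<in> hom X B C \<longrightarrow> cmp X g f \<in> hom X A C) \<and>
    (\<forall>A B f. f \<in> hom X A B \<longrightarrow> cmp X f (idm X A) = f \<and> cmp X (idm X B) f = f) \<and>
    (\<forall>A B C D f g h. f \<in> hom X A B \<longrightarrow> g \<in> hom X B C \<longrightarrow> h \<in> hom X C D \<longrightarrow>
        cmp X h (cmp X g f) = cmp X (cmp X h g) f)"

definition preadditive :: "('o,'m,'e,'z) extri_data_scheme \<Rightarrow> bool" where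
  "preadditive X \<longleftrightarrow>
    (\<forall>A\<in>Ob X. \<forall>B\<in>Ob X.
       comm_group \<lparr>carrier = hom X A B, mult = madd X, one = mzero X A B\<rparr>) \<and>
    (\<forall>A B C f f' g. f \<in> hom X A B \<longrightarrow> f' \<in> hom X A B \<longrightarrow> g \<in> hom X B C \<longrightarrow>
        cmp X g (madd X f f') = madd X (cmp X g f) (cmp X g f')) \<and>
    (\<forall>A B C f g g'. f \<in> hom X A B \<longrightarrow> g \<in> hom X B C \<longrightarrow> g' \<in> hom X B C \<longrightarrow>
        cmp X (madd X g g') f = madd X (cmp X g f) (cmp X g' f))"

definition zero_obj :: "('o,'m,'e,'z) extri_data_scheme \<Rightarrow> 'o \<Rightarrow> bool" where
  "zero_obj X Z \<longleftrightarrow> Z \<in> Ob X \<and>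
     (\<forall>A\<in>Ob X. hom X Z A = {mzero X Z A} \<and> hom X A Z = {mzero X A Z})"

definition biprod :: "('o,'m,'e,'z) extri_data_scheme \<Rightarrow> 'o \<Rightarrow> 'o \<Rightarrow> 'o \<Rightarrow> 'm \<Rightarrow> 'm \<Rightarrow> 'm \<Rightarrow> 'm \<Rightarrow> bool" where
  "biprod X A1 A2 S i1 i2 p1 p2 \<longleftrightarrow> S \<in> Ob X \<and>
     i1 \<in> hom X A1 S \<and> i2 \<in> hom X A2 S \<and> p1 \<in> hom X S A1 \<and> p2 \<in> hom X S A2 \<and>
     cmp X p1 i1 = idm X A1 \<and> cmp X p2 i2 = idm X A2 \<and>
     cmp X p2 i1 = mzero X A1 A2 \<and> cmp X p1 i2 = mzero X A2 A1 \<and>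
     madd X (cmp X i1 p1) (cmp X i2 p2) = idm X S"

definition additive_cat :: "('o,'m,'e,'z) extri_data_scheme \<Rightarrow> bool" where
  "additive_cat X \<longleftrightarrow> category X \<and> preadditive X \<and> (\<exists>Z. zero_obj X Z) \<and>
     (\<forall>A1\<in>Ob X. \<forall>A2\<in>Ob X. \<exists>S i1 i2 p1 p2. biprod X A1 A2 S i1 i2 p1 p2)"

definition biadditive_functor :: "('o,'m,'e,'z) extri_data_scheme \<Rightarrow> bool" where
  "biadditive_functor X \<longleftrightarrow>
    (\<forall>d\<in>Ext X. eC X d \<in> Ob X \<and> eA X d \<in> Ob X) \<and>
    (\<forall>C\<in>Ob X. \<forall>A\<in>Ob X.
       comm_group \<lparr>carrier = ext X C A, mult = eadd X, one = ezero X C A\<rparr>) \<and>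
    (\<forall>A A' C a d. a \<in> hom X A A' \<longrightarrow> d \<in> ext X C A \<longrightarrow> push X a d \<in> ext X C A') \<and>
    (\<forall>C C' A c d. c \<in> hom X C' C \<longrightarrow> d \<in> ext X C A \<longrightarrow> pull X c d \<in> ext X C' A) \<and>
    (\<forall>C A d. d \<in> ext X C A \<longrightarrow> push X (idm X A) d = d \<and> pull X (idm X C) d = d) \<and>
    (\<forall>A A' A'' C a a' d. a \<in> hom X A A' \<longrightarrow> a' \<in> hom X A' A'' \<longrightarrow> d \<in> ext X C A \<longrightarrow>
        push X (cmp X a' a) d = push X a' (push X a d)) \<and>
    (\<forall>C C' C'' A c c' d. c \<in> hom X C' C \<longrightarrow> c' \<in> hom X C'' C' \<longrightarrow> d \<in> ext X C A \<longrightarrow>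
        pull X (cmp X c c') d = pull X c' (pull X c d)) \<and>
    (\<forall>A A' C C' a c d. a \<in> hom X A A' \<longrightarrow> c \<in> hom X C' C \<longrightarrow> d \<in> ext X C A \<longrightarrow>
        push X a (pull X c d) = pull X c (push X a d)) \<and>
    (\<forall>A A' C a d d'. a \<in> hom X A A' \<longrightarrow> d \<in> ext X C A \<longrightarrow> d' \<in> ext X C A \<longrightarrow>
        push X a (eadd X d d') = eadd X (push X a d) (push X a d')) \<and>
    (\<forall>C C' A c d d'. c \<in> hom X C' C \<longrightarrow> d \<in> ext X C A \<longrightarrow> d' \<in> ext X C A \<longrightarrow>
        pull X c (eadd X d d') = eadd X (pull X c d) (pull X c d')) \<and>
    (\<forall>A A' C a a' d. a \<in> hom X A A' \<longrightarrow> a' \<in> hom X A A' \<longrightarrow> d \<in> ext X C A \<longrightarrow>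
        push X (madd X a a') d = eadd X (push X a d) (push X a' d)) \<and>
    (\<forall>C C' A c c' d. c \<in> hom X C' C \<longrightarrow> c' \<in> hom X C' C \<longrightarrow> d \<in> ext X C A \<longrightarrow>
        pull X (madd X c c') d = eadd X (pull X c d) (pull X c' d))"

definition iso :: "('o,'m,'e,'z) extri_data_scheme \<Rightarrow> 'm \<Rightarrow> 'o \<Rightarrow> 'o \<Rightarrow> bool" where
  "iso X f A B \<longleftrightarrow> f \<in> hom X A B \<and>
     (\<exists>g\<in>hom X B A. cmp X g f = idm X A \<and> cmp X f g = idm X B)"

definition seq_equiv :: "('o,'m,'e,'z) extri_data_scheme \<Rightarrow> 'o \<Rightarrow> 'o \<Rightarrow> 'm \<times> 'm \<Rightarrow> 'm \<times> 'm \<Rightarrow> bool" where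
  "seq_equiv X A C p q \<longleftrightarrow> (\<exists>B B' b. fst p \<in> hom X A B \<and> snd p \<in> hom X B C \<and>
      fst q \<in> hom X A B' \<and> snd q \<in> hom X B' C \<and> iso X b B B' \<and>
      cmp X b (fst p) = fst q \<and> cmp X (snd q) b = snd p)"

definition realization :: "('o,'m,'e,'z) extri_data_scheme \<Rightarrow> bool" where
  "realization X \<longleftrightarrow>
    (\<forall>C A d. d \<in> ext X C A \<longrightarrow>
       real X d \<noteq> {} \<and> (\<forall>p\<in>real X d. \<forall>q. q \<in> real X d \<longleftrightarrow> seq_equiv X A C p q)) \<and>
    (\<forall>A B C A' B' C' x y x' y' d d' a c.
       d \<in> ext X C A \<longrightarrow> d' \<in> ext X C' A' \<longrightarrow>
       x \<in> hom X A B \<longrightarrow> y \<in> hom X B C \<longrightarrow> x' \<in> hom X A' B' \<longrightarrow> y' \<in> hom X B' C' \<longrightarrow>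
       (x, y) \<in> real X d \<longrightarrow> (x', y') \<in> real X d' \<longrightarrow>
       a \<in> hom X A A' \<longrightarrow> c \<in> hom X C C' \<longrightarrow> push X a d = pull X c d' \<longrightarrow>
       (\<exists>b\<in>hom X B B'. cmp X b x = cmp X x' a \<and> cmp X y' b = cmp X c y))"

text \<open>(ET2): s is an additive realisation (Nakaoka--Palu Def. 2.10).
  The extension theta in E(C+C',A+A') is the direct sum of d and d'.\<close>
definition additive_realization :: "('o,'m,'e,'z) extri_data_scheme \<Rightarrow> bool" where
  "additive_realization X \<longleftrightarrow> realization X \<and>
    (\<forall>C\<in>Ob X. \<forall>A\<in>Ob X. \<forall>S i1 i2 p1 p2. biprod X A C S i1 i2 p1 p2 \<longrightarrow>
        (i1, p2) \<in> real X (ezero X C A)) \<and>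
    (\<forall>A B C A' B' C' x y x' y' d d' SA ia1 ia2 pa1 pa2 SB ib1 ib2 pb1 pb2
        SC ic1 ic2 pc1 pc2 th.
       d \<in> ext X C A \<longrightarrow> d' \<in> ext X C' A' \<longrightarrow>
       x \<in> hom X A B \<longrightarrow> y \<in> hom X B C \<longrightarrow> x' \<in> hom X A' B' \<longrightarrow> y' \<in> hom X B' C' \<longrightarrow>
       (x, y) \<in> real X d \<longrightarrow> (x', y') \<in> real X d' \<longrightarrow>
       biprod X A A' SA ia1 ia2 pa1 pa2 \<longrightarrow> biprod X B B' SB ib1 ib2 pb1 pb2 \<longrightarrow>
       biprod X C C' SC ic1 ic2 pc1 pc2 \<longrightarrow> th \<in> ext X SC SA \<longrightarrow>
       pull X ic1 (push X pa1 th) = d \<longrightarrow> pull X ic2 (push X pa2 th) = d' \<longrightarrow>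
       pull X ic2 (push X pa1 th) = ezero X C' A \<longrightarrow> pull X ic1 (push X pa2 th) = ezero X C A' \<longrightarrow>
       (madd X (cmp X ib1 (cmp X x pa1)) (cmp X ib2 (cmp X x' pa2)),
        madd X (cmp X ic1 (cmp X y pb1)) (cmp X ic2 (cmp X y' pb2))) \<in> real X th)"

definition ET3 :: "('o,'m,'e,'z) extri_data_scheme \<Rightarrow> bool" where
  "ET3 X \<longleftrightarrow>
    (\<forall>A B C A' B' C' x y x' y' d d' a b.
       d \<in> ext X C A \<longrightarrow> d' \<in> ext X C' A' \<longrightarrow>
       x \<in> hom X A B \<longrightarrow> y \<in> hom X B C \<longrightarrow> x' \<in> hom X A' B' \<longrightarrow> y' \<in> hom X B' C' \<longrightarrow>
       (x, y) \<in> real X d \<longrightarrow> (x', y') \<in> real X d' \<longrightarrow>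
       a \<in> hom X A A' \<longrightarrow> b \<in> hom X B B' \<longrightarrow> cmp X b x = cmp X x' a \<longrightarrow>
       (\<exists>c\<in>hom X C C'. cmp X c y = cmp X y' b \<and> push X a d = pull X c d'))"

definition ET3op :: "('o,'m,'e,'z) extri_data_scheme \<Rightarrow> bool" where
  "ET3op X \<longleftrightarrow>
    (\<forall>A B C A' B' C' x y x' y' d d' b c.
       d \<in> ext X C A \<longrightarrow> d' \<in> ext X C' A' \<longrightarrow>
       x \<in> hom X A B \<longrightarrow> y \<in> hom X B C \<longrightarrow> x' \<in> hom X A' B' \<longrightarrow> y' \<in> hom X B' C' \<longrightarrow>
       (x, y) \<in> real X d \<longrightarrow> (x', y') \<in> real X d' \<longrightarrow>
       b \<in> hom X B B' \<longrightarrow> c \<in> hom X C C' \<longrightarrow> cmp X y' b = cmp X c y \<longrightarrow>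
       (\<exists>a\<in>hom X A A'. cmp X b x = cmp X x' a \<and> push X a d = pull X c d'))"

definition ET4 :: "('o,'m,'e,'z) extri_data_scheme \<Rightarrow> bool" where
  "ET4 X \<longleftrightarrow>
    (\<forall>A B C D F f f' g g' d d'.
       d \<in> ext X D A \<longrightarrow> d' \<in> ext X F B \<longrightarrow>
       f \<in> hom X A B \<longrightarrow> f' \<in> hom X B D \<longrightarrow> g \<in> hom X B C \<longrightarrow> g' \<in> hom X C F \<longrightarrow>
       (f, f') \<in> real X d \<longrightarrow> (g, g') \<in> real X d' \<longrightarrow>
       (\<exists>E h h' e1 e2 d''. E \<in> Ob X \<and> h \<in> hom X A C \<and> h' \<in> hom X C E \<and>
          e1 \<in> hom X D E \<and> e2 \<in> hom X E F \<and> d'' \<in> ext X E A \<and> (h, h') \<in> real X d'' \<and>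
          cmp X g f = h \<and> cmp X e1 f' = cmp X h' g \<and> cmp X e2 h' = g' \<and>
          (e1, e2) \<in> real X (push X f' d') \<and>
          pull X e1 d'' = d \<and> push X f d'' = pull X e2 d'))"

definition ET4op :: "('o,'m,'e,'z) extri_data_scheme \<Rightarrow> bool" where
  "ET4op X \<longleftrightarrow>
    (\<forall>A B C D F f f' g g' d d'.
       d \<in> ext X B D \<longrightarrow> d' \<in> ext X C F \<longrightarrow>
       f' \<in> hom X D A \<longrightarrow> f \<in> hom X A B \<longrightarrow> g' \<in> hom X F B \<longrightarrow> g \<in> hom X B C \<longrightarrow>
       (f', f) \<in> real X d \<longrightarrow> (g', g) \<in> real X d' \<longrightarrow>
       (\<exists>E h h' e1 e2 d''. E \<in> Ob X \<and> h' \<in> hom X E A \<and> h \<in> hom X A C \<and>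
          e1 \<in> hom X D E \<and> e2 \<in> hom X E F \<and> d'' \<in> ext X C E \<and> (h', h) \<in> real X d'' \<and>
          cmp X h' e1 = f' \<and> cmp X f h' = cmp X g' e2 \<and> cmp X g f = h \<and>
          (e1, e2) \<in> real X (pull X g' d) \<and>
          d' = push X e2 d'' \<and> push X e1 d = pull X g d''))"

definition extriangulated :: "('o,'m,'e,'z) extri_data_scheme \<Rightarrow> bool" where
  "extriangulated X \<longleftrightarrow> additive_cat X \<and> biadditive_functor X \<and>
     additive_realization X \<and> ET3 X \<and> ET3op X \<and> ET4 X \<and> ET4op X"

definition inflation :: "('o,'m,'e,'z) extri_data_scheme \<Rightarrow> 'm \<Rightarrow> bool" where
  "inflation X x \<longleftrightarrow> (\<exists>C A d y. d \<in> ext X C A \<and> (x, y) \<in> real X d)"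

definition deflation :: "('o,'m,'e,'z) extri_data_scheme \<Rightarrow> 'm \<Rightarrow> bool" where
  "deflation X y \<longleftrightarrow> (\<exists>C A d x. d \<in> ext X C A \<and> (x, y) \<in> real X d)"

definition SigF :: "('o,'m,'e,'z) extri_data_scheme \<Rightarrow> ('o \<Rightarrow> 'o) \<Rightarrow> ('o \<Rightarrow> 'e) \<Rightarrow> 'm \<Rightarrow> 'm" where
  "SigF X Sig dl f = (THE g. g \<in> hom X (Sig (Dm X f)) (Sig (Cd X f)) \<and>
      push X f (dl (Dm X f)) = pull X g (dl (Cd X f)))"

text \<open>E^1(C,a)(eps) = Sig a o eps, E^1(c,A)(eps) = eps o c, r(eps) = s(eps^* dl_A).\<close>
definition E1push :: "('o,'m,'e,'z) extri_data_scheme \<Rightarrow> ('o \<Rightarrow> 'o) \<Rightarrow> ('o \<Rightarrow> 'e) \<Rightarrow> 'm \<Rightarrow> 'm \<Rightarrow> 'm" where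
  "E1push X Sig dl a eps = cmp X (SigF X Sig dl a) eps"

definition E1pull :: "('o,'m,'e,'z) extri_data_scheme \<Rightarrow> 'm \<Rightarrow> 'm \<Rightarrow> 'm" where
  "E1pull X c eps = cmp X eps c"

definition rr :: "('o,'m,'e,'z) extri_data_scheme \<Rightarrow> ('o \<Rightarrow> 'e) \<Rightarrow> 'o \<Rightarrow> 'm \<Rightarrow> ('m \<times> 'm) set" where
  "rr X dl A eps = real X (pull X eps (dl A))"

end

theory Submission
  imports Defs
begin

lemma grp_eq:
  assumes "group G" "g \<in> carrier G" "h \<in> carrier G" "g \<otimes>\<^bsub>G\<^esub> inv\<^bsub>G\<^esub> h = \<one>\<^bsub>G\<^esub>"
  shows "g = h"
  using assms by (metis group.inv_closed group.l_inv monoid.m_assoc monoid.r_one monoid.l_one monoid.one_closed group.is_monoid)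

lemma grp_idem:
  assumes "group G" "u \<in> carrier G" "u = u \<otimes>\<^bsub>G\<^esub> u"
  shows "u = \<one>\<^bsub>G\<^esub>"
  using assms group.l_cancel_one' by fastforce

context
  fixes X :: "('o,'m,'e,'z) extri_data_scheme"
  assumes ex: "extriangulated X"
begin

lemma cat: "category X" using ex unfolding extriangulated_def additive_cat_def by blast
lemma preadd: "preadditive X" using ex unfolding extriangulated_def additive_cat_def by blast
lemma bif: "biadditive_functor X" using ex unfolding extriangulated_def by blast
lemma rea: "realization X" using ex unfolding extriangulated_def additive_realization_def by blast
lemma et3: "ET3 X" using ex unfolding extriangulated_def by blast
lemma et3op: "ET3op X" using ex unfolding extriangulated_def by blast

lemma hom_ob: "f \<in> hom X A B \<Longrightarrow> A \<in> Ob X \<and> B \<in> Ob X"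
  using cat unfolding category_def hom_def by auto

lemma comp_hom: "f \<in> hom X A B \<Longrightarrow> g \<in> hom X B C \<Longrightarrow> cmp X g f \<in> hom X A C"
  using cat unfolding category_def by blast

lemma id_hom: "A \<in> Ob X \<Longrightarrow> idm X A \<in> hom X A A"
  using cat unfolding category_def by blast

lemma id_l: "f \<in> hom X A B \<Longrightarrow> cmp X (idm X B) f = f"
  using cat unfolding category_def by blast
lemma id_r: "f \<in> hom X A B \<Longrightarrow> cmp X f (idm X A) = f"
  using cat unfolding category_def by blast

lemma assoc: "f \<in> hom X A B \<Longrightarrow> g \<in> hom X B C \<Longrightarrow> h \<in> hom X C D \<Longrightarrow>
        cmp X h (cmp X g f) = cmp X (cmp X h g) f"
  using cat unfolding category_def by blast

lemma hom_grp: "A \<in> Ob X \<Longrightarrow> B \<in> Ob X \<Longrightarrow>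
   comm_group \<lparr>carrier = hom X A B, mult = madd X, one = mzero X A B\<rparr>"
  using preadd unfolding preadditive_def by blast

lemma ext_grp: "C \<in> Ob X \<Longrightarrow> A \<in> Ob X \<Longrightarrow>
   comm_group \<lparr>carrier = ext X C A, mult = eadd X, one = ezero X C A\<rparr>"
  using bif[unfolded biadditive_functor_def, THEN conjunct2, THEN conjunct1] by blast

lemma zero_hom: "A \<in> Ob X \<Longrightarrow> B \<in> Ob X \<Longrightarrow> mzero X A B \<in> hom X A B"
  using hom_grp[of A B] comm_group.axioms(2)[THEN group.is_monoid, THEN monoid.one_closed] by fastforce

lemma ezero_ext: "C \<in> Ob X \<Longrightarrow> A \<in> Ob X \<Longrightarrow> ezero X C A \<in> ext X C A"
  using ext_grp[of C A] comm_group.axioms(2)[THEN group.is_monoid, THEN monoid.one_closed] by fastforce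

lemma zero_add: "A \<in> Ob X \<Longrightarrow> B \<in> Ob X \<Longrightarrow> madd X (mzero X A B) (mzero X A B) = mzero X A B"
  using hom_grp[of A B] zero_hom[of A B] comm_group.axioms(2)[THEN group.is_monoid, THEN monoid.l_one] by fastforce

lemma cmp_zero_r:
  assumes "A \<in> Ob X" "f \<in> hom X B C"
  shows "cmp X f (mzero X A B) = mzero X A C"
proof -
  have B: "B \<in> Ob X" and C: "C \<in> Ob X" using hom_ob[OF assms(2)] by auto
  have z: "mzero X A B \<in> hom X A B" using zero_hom assms B by blast
  have "cmp X f (mzero X A B) = cmp X f (madd X (mzero X A B) (mzero X A B))"
    using zero_add assms B by simp
  also have "\<dots> = madd X (cmp X f (mzero X A B)) (cmp X f (mzero X A B))"
    using preadd z assms unfolding preadditive_def by blast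
  finally have e: "cmp X f (mzero X A B) = madd X (cmp X f (mzero X A B)) (cmp X f (mzero X A B))" .
  have "cmp X f (mzero X A B) \<in> hom X A C" using comp_hom z assms by blast
  then show ?thesis
    using grp_idem[OF comm_group.axioms(2)[OF hom_grp[OF assms(1) C]]] e by simp
qed

lemma cmp_zero_l:
  assumes "C \<in> Ob X" "f \<in> hom X A B"
  shows "cmp X (mzero X B C) f = mzero X A C"
proof -
  have A: "A \<in> Ob X" and B: "B \<in> Ob X" using hom_ob[OF assms(2)] by auto
  have z: "mzero X B C \<in> hom X B C" using zero_hom assms B by blast
  have "cmp X (mzero X B C) f = cmp X (madd X (mzero X B C) (mzero X B C)) f"
    using zero_add assms B by simp
  also have "\<dots> = madd X (cmp X (mzero X B C) f) (cmp X (mzero X B C) f)"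
    using preadd z assms unfolding preadditive_def by blast
  finally have e: "cmp X (mzero X B C) f = madd X (cmp X (mzero X B C) f) (cmp X (mzero X B C) f)" .
  have "cmp X (mzero X B C) f \<in> hom X A C" using comp_hom z assms by blast
  then show ?thesis
    using grp_idem[OF comm_group.axioms(2)[OF hom_grp[OF A assms(1)]]] e by simp
qed

lemma pull_ext: "c \<in> hom X C' C \<Longrightarrow> d \<in> ext X C A \<Longrightarrow> pull X c d \<in> ext X C' A"
  using bif[unfolded biadditive_functor_def, THEN conjunct2, THEN conjunct2, THEN conjunct2, THEN conjunct1] by blast
lemma push_ext: "a \<in> hom X A A' \<Longrightarrow> d \<in> ext X C A \<Longrightarrow> push X a d \<in> ext X C A'"
  using bif[unfolded biadditive_functor_def, THEN conjunct2, THEN conjunct2, THEN conjunct1] by blast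
lemma push_id: "d \<in> ext X C A \<Longrightarrow> push X (idm X A) d = d"
  using bif[unfolded biadditive_functor_def, THEN conjunct2, THEN conjunct2, THEN conjunct2, THEN conjunct2, THEN conjunct1] by blast
lemma pull_cmp: "c \<in> hom X C' C \<Longrightarrow> c' \<in> hom X C'' C' \<Longrightarrow> d \<in> ext X C A \<Longrightarrow>
        pull X (cmp X c c') d = pull X c' (pull X c d)"
  using bif[unfolded biadditive_functor_def, THEN conjunct2, THEN conjunct2, THEN conjunct2, THEN conjunct2, THEN conjunct2, THEN conjunct2, THEN conjunct1] by blast
lemma push_pull: "a \<in> hom X A A' \<Longrightarrow> c \<in> hom X C' C \<Longrightarrow> d \<in> ext X C A \<Longrightarrow>
        push X a (pull X c d) = pull X c (push X a d)"
  using bif[unfolded biadditive_functor_def, THEN conjunct2, THEN conjunct2, THEN conjunct2, THEN conjunct2, THEN conjunct2, THEN conjunct2, THEN conjunct2, THEN conjunct1] by blast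
lemma pull_add: "c \<in> hom X C' C \<Longrightarrow> c' \<in> hom X C' C \<Longrightarrow> d \<in> ext X C A \<Longrightarrow>
        pull X (madd X c c') d = eadd X (pull X c d) (pull X c' d)"
  using bif[unfolded biadditive_functor_def, THEN conjunct2, THEN conjunct2, THEN conjunct2, THEN conjunct2, THEN conjunct2, THEN conjunct2, THEN conjunct2, THEN conjunct2, THEN conjunct2, THEN conjunct2, THEN conjunct2] by blast

lemma pull_zero:
  assumes "C' \<in> Ob X" "d \<in> ext X C A"
  shows "pull X (mzero X C' C) d = ezero X C' A"
proof -
  have C: "C \<in> Ob X" and A: "A \<in> Ob X" using assms bif unfolding biadditive_functor_def ext_def by auto
  have z: "mzero X C' C \<in> hom X C' C" using zero_hom assms C by blast
  have e: "pull X (mzero X C' C) d = eadd X (pull X (mzero X C' C) d) (pull X (mzero X C' C) d)"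
    using pull_add[OF z z assms(2)] zero_add[OF assms(1) C] by simp
  have "pull X (mzero X C' C) d \<in> ext X C' A" using pull_ext z assms by blast
  then show ?thesis
    using grp_idem[OF comm_group.axioms(2)[OF ext_grp[OF assms(1) A]]] e by simp
qed

end


context
  fixes X :: "('o,'m,'e,'z) extri_data_scheme" and Z :: 'o
    and Sig :: "'o \<Rightarrow> 'o" and dl :: "'o \<Rightarrow> 'e"
  assumes ex: "extriangulated X"
    and zero: "zero_obj X Z"
    and sig: "\<forall>Y\<in>Ob X. Sig Y \<in> Ob X \<and> dl Y \<in> ext X (Sig Y) Y \<and>
                (mzero X Y Z, mzero X Z (Sig Y)) \<in> real X (dl Y)"
begin

lemma Zob: "Z \<in> Ob X" using zero unfolding zero_obj_def by blast

lemma homZ: "A \<in> Ob X \<Longrightarrow> hom X A Z = {mzero X A Z}"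
  using zero unfolding zero_obj_def by blast

lemma pull_inj:
  assumes A': "A' \<in> Ob X" and g: "g \<in> hom X C (Sig A')" and h: "h \<in> hom X C (Sig A')"
    and eq: "pull X g (dl A') = pull X h (dl A')"
  shows "g = h"
proof -
  have C: "C \<in> Ob X" using hom_ob[OF ex g] by blast
  have SA: "Sig A' \<in> Ob X" and dA: "dl A' \<in> ext X (Sig A') A'"
    and rA: "(mzero X A' Z, mzero X Z (Sig A')) \<in> real X (dl A')" using sig A' by auto
  define G where "G = \<lparr>carrier = hom X C (Sig A'), mult = madd X, one = mzero X C (Sig A')\<rparr>"
  have grp: "group G" unfolding G_def using comm_group.axioms(2)[OF hom_grp[OF ex C SA]] .
  have ih: "inv\<^bsub>G\<^esub> h \<in> hom X C (Sig A')" using group.inv_closed[OF grp] h unfolding G_def by auto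
  define k where "k = madd X g (inv\<^bsub>G\<^esub> h)"
  have k: "k \<in> hom X C (Sig A')" unfolding k_def
    using monoid.m_closed[OF group.is_monoid[OF grp]] g ih unfolding G_def by auto
  have hinv: "madd X h (inv\<^bsub>G\<^esub> h) = mzero X C (Sig A')"
    using group.r_inv[OF grp] h unfolding G_def by auto
  have "pull X k (dl A') = eadd X (pull X g (dl A')) (pull X (inv\<^bsub>G\<^esub> h) (dl A'))"
    unfolding k_def using pull_add[OF ex g ih dA] .
  also have "\<dots> = eadd X (pull X h (dl A')) (pull X (inv\<^bsub>G\<^esub> h) (dl A'))" using eq by simp
  also have "\<dots> = pull X (madd X h (inv\<^bsub>G\<^esub> h)) (dl A')" using pull_add[OF ex h ih dA] by simp
  also have "\<dots> = ezero X C A'" using hinv pull_zero[OF ex C dA] by simp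
  finally have pk: "pull X k (dl A') = ezero X C A'" .
  obtain S i1 i2 p1 p2 where bp: "biprod X A' C S i1 i2 p1 p2"
    using ex A' C unfolding extriangulated_def additive_cat_def by blast
  have bpf: "S \<in> Ob X" "i1 \<in> hom X A' S" "i2 \<in> hom X C S" "p1 \<in> hom X S A'" "p2 \<in> hom X S C"
     "cmp X p2 i2 = idm X C" using bp unfolding biprod_def by auto
  have r0: "(i1, p2) \<in> real X (ezero X C A')"
    using ex bp C A' unfolding extriangulated_def additive_realization_def by blast
  have e0: "ezero X C A' \<in> ext X C A'" using ezero_ext[OF ex C A'] .
  have pe: "push X (idm X A') (ezero X C A') = pull X k (dl A')"
    using push_id[OF ex e0] pk by simp
  obtain b where b: "b \<in> hom X S Z" "cmp X (mzero X Z (Sig A')) b = cmp X k p2"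
    using rea[OF ex, unfolded realization_def, THEN conjunct2, rule_format,
        OF e0 dA bpf(2) bpf(5) zero_hom[OF ex A' Zob] zero_hom[OF ex Zob SA] r0 rA
           id_hom[OF ex A'] k pe] by blast
  have "k = cmp X k (cmp X p2 i2)" using bpf(6) id_r[OF ex k] by simp
  also have "\<dots> = cmp X (cmp X k p2) i2" using assoc[OF ex bpf(3) bpf(5) k] .
  also have "\<dots> = cmp X (mzero X S (Sig A')) i2" using b cmp_zero_l[OF ex SA b(1)] by simp
  also have "\<dots> = mzero X C (Sig A')" using cmp_zero_l[OF ex SA bpf(3)] .
  finally have "k = mzero X C (Sig A')" .
  then show ?thesis using grp_eq[OF grp, of g h] g h unfolding G_def k_def by simp
qed

lemma SigF_spec:
  assumes a: "a \<in> hom X A A'"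
  shows "SigF X Sig dl a \<in> hom X (Sig A) (Sig A') \<and>
         push X a (dl A) = pull X (SigF X Sig dl a) (dl A')"
proof -
  have A: "A \<in> Ob X" and A': "A' \<in> Ob X" using hom_ob[OF ex a] by auto
  have da: "Dm X a = A" "Cd X a = A'" using a unfolding hom_def by auto
  have s1: "Sig A \<in> Ob X" "dl A \<in> ext X (Sig A) A" "(mzero X A Z, mzero X Z (Sig A)) \<in> real X (dl A)"
    using sig A by auto
  have s2: "Sig A' \<in> Ob X" "dl A' \<in> ext X (Sig A') A'" "(mzero X A' Z, mzero X Z (Sig A')) \<in> real X (dl A')"
    using sig A' by auto
  have cm: "cmp X (idm X Z) (mzero X A Z) = cmp X (mzero X A' Z) a"
    using id_l[OF ex zero_hom[OF ex A Zob]] cmp_zero_l[OF ex Zob a] by simp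
  obtain c where c: "c \<in> hom X (Sig A) (Sig A')" "push X a (dl A) = pull X c (dl A')"
    using et3[OF ex, unfolded ET3_def, rule_format, OF s1(2) s2(2)
      zero_hom[OF ex A Zob] zero_hom[OF ex Zob s1(1)] zero_hom[OF ex A' Zob] zero_hom[OF ex Zob s2(1)]
      s1(3) s2(3) a id_hom[OF ex Zob] cm] by blast
  have "\<exists>!g. g \<in> hom X (Sig A) (Sig A') \<and> push X a (dl A) = pull X g (dl A')"
    using c pull_inj[OF A'] by metis
  from theI'[OF this] show ?thesis unfolding SigF_def da .
qed

lemma key:
  assumes eps: "eps \<in> hom X C (Sig A)" and eps': "eps' \<in> hom X C' (Sig A')"
    and a: "a \<in> hom X A A'" and c: "c \<in> hom X C C'"
    and eq: "push X a (pull X eps (dl A)) = pull X c (pull X eps' (dl A'))"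
  shows "E1push X Sig dl a eps = E1pull X c eps'"
proof -
  have A: "A \<in> Ob X" and A': "A' \<in> Ob X" using hom_ob[OF ex a] by auto
  have dA: "dl A \<in> ext X (Sig A) A" and dA': "dl A' \<in> ext X (Sig A') A'" using sig A A' by auto
  obtain s where s: "s = SigF X Sig dl a" by blast
  have ss: "s \<in> hom X (Sig A) (Sig A')" "push X a (dl A) = pull X s (dl A')"
    using SigF_spec[OF a] s by auto
  have "pull X (cmp X s eps) (dl A') = pull X eps (pull X s (dl A'))"
    using pull_cmp[OF ex ss(1) eps dA'] .
  also have "\<dots> = pull X eps (push X a (dl A))" using ss(2) by simp
  also have "\<dots> = push X a (pull X eps (dl A))" using push_pull[OF ex a eps dA] by simp
  also have "\<dots> = pull X c (pull X eps' (dl A'))" using eq .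
  also have "\<dots> = pull X (cmp X eps' c) (dl A')" using pull_cmp[OF ex eps' c dA'] by simp
  finally have "pull X (cmp X s eps) (dl A') = pull X (cmp X eps' c) (dl A')" .
  then have "cmp X s eps = cmp X eps' c"
    using pull_inj[OF A' comp_hom[OF ex eps ss(1)] comp_hom[OF ex c eps']] by blast
  then show ?thesis unfolding E1push_def E1pull_def s .
qed

end

theorem proposition3p12:
  fixes X :: "('o,'m,'e) extri_data" and Z :: 'o
    and Sig :: "'o \<Rightarrow> 'o" and dl :: "'o \<Rightarrow> 'e"
  assumes ext: "extriangulated X"
    and zero: "zero_obj X Z"
    and infl: "\<forall>A\<in>Ob X. inflation X (mzero X A Z)"
    and defl: "\<forall>A\<in>Ob X. deflation X (mzero X Z A)"
    and sig: "\<forall>Y\<in>Ob X. Sig Y \<in> Ob X \<and> dl Y \<in> ext X (Sig Y) Y \<and>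
                (mzero X Y Z, mzero X Z (Sig Y)) \<in> real X (dl Y)"
  shows
    "(\<forall>A B C A' B' C' x y x' y' eps eps' a b.
        eps \<in> hom X C (Sig A) \<longrightarrow> eps' \<in> hom X C' (Sig A') \<longrightarrow>
        x \<in> hom X A B \<longrightarrow> y \<in> hom X B C \<longrightarrow> x' \<in> hom X A' B' \<longrightarrow> y' \<in> hom X B' C' \<longrightarrow>
        (x, y) \<in> rr X dl A eps \<longrightarrow> (x', y') \<in> rr X dl A' eps' \<longrightarrow>
        a \<in> hom X A A' \<longrightarrow> b \<in> hom X B B' \<longrightarrow> cmp X b x = cmp X x' a \<longrightarrow>
        (\<exists>c\<in>hom X C C'. cmp X c y = cmp X y' b \<and>
            E1push X Sig dl a eps = E1pull X c eps'))
     \<and>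
     (\<forall>A B C A' B' C' x y x' y' eps eps' b c.
        eps \<in> hom X C (Sig A) \<longrightarrow> eps' \<in> hom X C' (Sig A') \<longrightarrow>
        x \<in> hom X A B \<longrightarrow> y \<in> hom X B C \<longrightarrow> x' \<in> hom X A' B' \<longrightarrow> y' \<in> hom X B' C' \<longrightarrow>
        (x, y) \<in> rr X dl A eps \<longrightarrow> (x', y') \<in> rr X dl A' eps' \<longrightarrow>
        b \<in> hom X B B' \<longrightarrow> c \<in> hom X C C' \<longrightarrow> cmp X y' b = cmp X c y \<longrightarrow>
        (\<exists>a\<in>hom X A A'. cmp X b x = cmp X x' a \<and>
            E1push X Sig dl a eps = E1pull X c eps'))"
proof (intro conjI allI impI)
  fix A B C A' B' C' x y x' y' eps eps' a b
  assume h: "eps \<in> hom X C (Sig A)" "eps' \<in> hom X C' (Sig A')"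
    "x \<in> hom X A B" "y \<in> hom X B C" "x' \<in> hom X A' B'" "y' \<in> hom X B' C'"
    "(x, y) \<in> rr X dl A eps" "(x', y') \<in> rr X dl A' eps'"
    "a \<in> hom X A A'" "b \<in> hom X B B'" "cmp X b x = cmp X x' a"
  have A: "A \<in> Ob X" and A': "A' \<in> Ob X" using hom_ob[OF ext h(9)] by auto
  have d: "pull X eps (dl A) \<in> ext X C A" using pull_ext[OF ext h(1)] sig A by blast
  have d': "pull X eps' (dl A') \<in> ext X C' A'" using pull_ext[OF ext h(2)] sig A' by blast
  obtain c where c: "c \<in> hom X C C'" "cmp X c y = cmp X y' b"
     "push X a (pull X eps (dl A)) = pull X c (pull X eps' (dl A'))"
    using et3[OF ext, unfolded ET3_def, rule_format, OF d d' h(3-6) h(7-8)[unfolded rr_def] h(9-11)]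
    by blast
  show "\<exists>c\<in>hom X C C'. cmp X c y = cmp X y' b \<and> E1push X Sig dl a eps = E1pull X c eps'"
    using c key[OF ext zero sig h(1,2,9) c(1,3)] by blast
next
  fix A B C A' B' C' x y x' y' eps eps' b c
  assume h: "eps \<in> hom X C (Sig A)" "eps' \<in> hom X C' (Sig A')"
    "x \<in> hom X A B" "y \<in> hom X B C" "x' \<in> hom X A' B'" "y' \<in> hom X B' C'"
    "(x, y) \<in> rr X dl A eps" "(x', y') \<in> rr X dl A' eps'"
    "b \<in> hom X B B'" "c \<in> hom X C C'" "cmp X y' b = cmp X c y"
  have A: "A \<in> Ob X" using hom_ob[OF ext h(3)] by auto
  have A': "A' \<in> Ob X" using hom_ob[OF ext h(5)] by auto
  have d: "pull X eps (dl A) \<in> ext X C A" using pull_ext[OF ext h(1)] sig A by blast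
  have d': "pull X eps' (dl A') \<in> ext X C' A'" using pull_ext[OF ext h(2)] sig A' by blast
  obtain a where a: "a \<in> hom X A A'" "cmp X b x = cmp X x' a"
     "push X a (pull X eps (dl A)) = pull X c (pull X eps' (dl A'))"
    using et3op[OF ext, unfolded ET3op_def, rule_format, OF d d' h(3-6) h(7-8)[unfolded rr_def] h(9-11)]
    by blast
  show "\<exists>a\<in>hom X A A'. cmp X b x = cmp X x' a \<and> E1push X Sig dl a eps = E1pull X c eps'"
    using a key[OF ext zero sig h(1,2) a(1) h(10) a(3)] by blast
qed

end
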